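(* For every $u\in S_n$ and every $J\subseteq[n]$, \[ \mathrm{wt}(\Delta_J u)=t^{\mathrm{des}(u)}q^{\mathrm{maj}(u)}\prod_{j\in J\,\triangle\,\mathrm{Des}(u)} tq^j,\] where $J\triangle\mathrm{Des}(u)=(J\cup\mathrm{Des}(u))\setminus(J\cap\mathrm{Des}(u))$ is the symmetric difference.
   Context: $S_n$ is the set of permutations of $[n]=\{1,\dots,n\}$, written as words $u=u_1\cdots u_n$, and regarded as elements of $B_n$ with all letters positive. $B_n$ is the set of signed permutations: words $w=w_1\cdots w_n$ on the alphabet $\{\bar 1,1,\dots,\bar n,n\}$ (where $\bar i=-i$, $\bar{\bar i}=i$) such that $|w_1|\cdots|w_n|$ is a permutation in $S_n$. The alphabet is totally ordered by $\bar 1<\bar 2<\cdots<\bar n<1<2<\cdots<n$. For a word $w$ over a totally ordered alphabet, $\mathrm{Des}(w)=\{i: w_i>w_{i+1}\}$, $\mathrm{des}(w)=|\mathrm{Des}(w)|$, and $\mathrm{maj}(w)=\sum_{i\in\mathrm{Des}(w)} i$. For $w\in B_n$: $\mathrm{fdes}(w)=2\,\mathrm{des}(w)+1$ if $w_1<0$ and $\mathrm{fdes}(w)=2\,\mathrm{des}(w)$ if $w_1>0$; $\mathrm{fmaj}(w)=2\,\mathrm{maj}(w)+|\{i:w_i<0\}|$; $\mathrm{wt}(w)=t^{\mathrm{fdes}(w)}q^{\mathrm{fmaj}(w)}$. For $1\le i\le n$, $\Delta_i w=\overline{w_1}\cdots\overline{w_i}\,w_{i+1}\cdots w_n$ (negate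 the first $i$ letters). These operators commute, and for $J=\{j_1<\cdots<j_k\}\subseteq[n]$, $\Delta_J=\Delta_{j_1}\cdots\Delta_{j_k}$ ($\Delta_\emptyset$ is the identity). *)

theory Defs
  imports Main
begin

text \<open>Words are int lists; the letter \<open>-i\<close> stands for \<open>bar i\<close>.
  Positions are 1-indexed: \<open>w_i = w ! (i - 1)\<close>.\<close>

definition perms :: "nat \<Rightarrow> int list set" where
  "perms n = {u. length u = n \<and> distinct u \<and> set u = int ` {1..n}}"

definition sless :: "int \<Rightarrow> int \<Rightarrow> bool" where
  "sless a b \<longleftrightarrow> (a < 0 \<and> b > 0) \<or> (a < 0 \<and> b < 0 \<and> - a < - b) \<or> (a > 0 \<and> b > 0 \<and> a < b)"

definition Des :: "int list \<Rightarrow> nat set" where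
  "Des w = {i. 1 \<le> i \<and> i < length w \<and> sless (w ! i) (w ! (i - 1))}"

definition des :: "int list \<Rightarrow> nat" where
  "des w = card (Des w)"

definition maj :: "int list \<Rightarrow> nat" where
  "maj w = (\<Sum>i\<in>Des w. i)"

definition negs :: "int list \<Rightarrow> nat" where
  "negs w = card {i. 1 \<le> i \<and> i \<le> length w \<and> w ! (i - 1) < 0}"

definition fdes :: "int list \<Rightarrow> nat" where
  "fdes w = (if w \<noteq> [] \<and> hd w < 0 then 2 * des w + 1 else 2 * des w)"

definition fmaj :: "int list \<Rightarrow> nat" where
  "fmaj w = 2 * maj w + negs w"

definition wt :: "'a::comm_ring_1 \<Rightarrow> 'a \<Rightarrow> int list \<Rightarrow> 'a" where
  "wt t q w = t ^ fdes w * q ^ fmaj w"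

definition Delta :: "nat \<Rightarrow> int list \<Rightarrow> int list" where
  "Delta i w = map (\<lambda>x. - x) (take i w) @ drop i w"

text \<open>\<open>Delta_J = Delta_{j1} \<circ> ... \<circ> Delta_{jk}\<close> for \<open>J = {j1 < ... < jk}\<close>.\<close>
definition DeltaSet :: "nat set \<Rightarrow> int list \<Rightarrow> int list" where
  "DeltaSet J w = foldr Delta (sorted_list_of_set J) w"

end

theory Submission
  imports Defs
begin

lemma Delta_len[simp]: "length (Delta i w) = length w"
  unfolding Delta_def by simp

lemma Delta_nth: "k < length w \<Longrightarrow> Delta i w ! k = (if k < i then - (w ! k) else w ! k)"
  unfolding Delta_def by (auto simp: nth_append min_def)

lemma foldr_Delta_len[simp]: "length (foldr Delta xs w) = length w"
  by (induction xs) auto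

lemma foldr_Delta_nth: "k < length w \<Longrightarrow>
  foldr Delta xs w ! k = (if odd (length (filter (\<lambda>j. k < j) xs)) then - (w ! k) else w ! k)"
  by (induction xs) (auto simp: Delta_nth)

definition cc :: "nat set \<Rightarrow> nat \<Rightarrow> nat" where
  "cc J p = card {j\<in>J. p \<le> j}"

lemma DeltaSet_len[simp]: "length (DeltaSet J w) = length w"
  unfolding DeltaSet_def by simp

lemma DeltaSet_nth: "finite J \<Longrightarrow> k < length w \<Longrightarrow>
  DeltaSet J w ! k = (if odd (cc J (Suc k)) then - (w ! k) else w ! k)"
proof -
  assume f: "finite J" and k: "k < length w"
  have "length (filter (\<lambda>j. k < j) (sorted_list_of_set J)) = cc J (Suc k)"
    unfolding cc_def using f by (subst distinct_length_filter) (auto intro: arg_cong[where f=card])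
  then show ?thesis unfolding DeltaSet_def using foldr_Delta_nth[OF k] by simp
qed


lemma cc_insert_min: "finite A \<Longrightarrow> \<forall>a\<in>A. m < a \<Longrightarrow>
   cc (insert m A) p = (if p \<le> m then Suc (card A) else cc A p)"
proof -
  assume f: "finite A" and mn: "\<forall>a\<in>A. m < a"
  show ?thesis
  proof (cases "p \<le> m")
    case True
    then have "{j \<in> insert m A. p \<le> j} = insert m A" using mn by fastforce
    moreover have "m \<notin> A" using mn by auto
    ultimately show ?thesis using True f unfolding cc_def by simp
  next
    case False
    then have "{j \<in> insert m A. p \<le> j} = {j\<in>A. p \<le> j}" by auto
    then show ?thesis using False unfolding cc_def by simp
  qed
qed

lemma cc_A_le: "\<forall>a\<in>A. m < a \<Longrightarrow> p \<le> m \<Longrightarrow> cc A p = card A"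
  unfolding cc_def by (rule arg_cong[where f=card]) fastforce

lemma finite_odd_cc: "finite A \<Longrightarrow> finite {p. P p \<and> odd (cc A p)}"
proof -
  assume f: "finite A"
  have "{p. P p \<and> odd (cc A p)} \<subseteq> (\<Union>a\<in>A. {..a})"
  proof
    fix p assume "p \<in> {p. P p \<and> odd (cc A p)}"
    then have "cc A p \<noteq> 0" by (metis (mono_tags, lifting) even_zero mem_Collect_eq)
    then have "{j\<in>A. p \<le> j} \<noteq> {}" unfolding cc_def by (metis card.empty)
    then show "p \<in> (\<Union>a\<in>A. {..a})" by auto
  qed
  moreover have "finite (\<Union>a\<in>A. {..a})" using f by auto
  ultimately show ?thesis by (rule finite_subset)
qed

lemma count_E: "finite J \<Longrightarrow> card {i\<in>J. even (cc J i)} = card J div 2"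
proof (induction J rule: finite_linorder_min_induct)
  case empty
  then show ?case by simp
next
  case (insert m A)
  have mA: "m \<notin> A" using insert by auto
  have eq: "{i\<in>insert m A. even (cc (insert m A) i)} =
     (if even (Suc (card A)) then insert m {i\<in>A. even (cc A i)} else {i\<in>A. even (cc A i)})"
    using insert by (auto simp: cc_insert_min)
  have fE: "finite {i\<in>A. even (cc A i)}" using insert by auto
  show ?case using insert mA fE by (subst eq) auto
qed

lemma sum_E: "finite J \<Longrightarrow> \<forall>j\<in>J. 0 < j \<Longrightarrow>
   \<Sum>J = 2 * (\<Sum>{i\<in>J. even (cc J i)}) + card {p. 1 \<le> p \<and> odd (cc J p)}"
proof (induction J rule: finite_linorder_min_induct)
  case empty
  then show ?case by (simp add: cc_def)
next
  case (insert m A)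
  have mA: "m \<notin> A" using insert by auto
  have m0: "0 < m" using insert by auto
  have eq: "{i\<in>insert m A. even (cc (insert m A) i)} =
     (if even (Suc (card A)) then insert m {i\<in>A. even (cc A i)} else {i\<in>A. even (cc A i)})"
    using insert by (auto simp: cc_insert_min)
  define R where "R = {p. m < p \<and> odd (cc A p)}"
  have fR: "finite R" unfolding R_def using finite_odd_cc[OF insert(1)] .
  have O1: "{p. 1 \<le> p \<and> odd (cc (insert m A) p)} =
     {p. 1 \<le> p \<and> p \<le> m \<and> odd (Suc (card A))} \<union> R"
    unfolding R_def using insert m0 by (auto simp: cc_insert_min)
  have O2: "{p. 1 \<le> p \<and> odd (cc A p)} =
     {p. 1 \<le> p \<and> p \<le> m \<and> odd (card A)} \<union> R"
    unfolding R_def using insert m0 cc_A_le[of A m] by auto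
  have c1: "card ({p. 1 \<le> p \<and> p \<le> m \<and> b} \<union> R) = (if b then m else 0) + card R" for b
  proof -
    have "{p. 1 \<le> p \<and> p \<le> m \<and> b} = (if b then {1..m} else {})" by auto
    moreover have "{1..m} \<inter> R = {}" unfolding R_def by auto
    ultimately show ?thesis using fR by (simp add: card_Un_disjoint)
  qed
  have IH: "\<Sum>A = 2 * (\<Sum>{i\<in>A. even (cc A i)}) + card {p. 1 \<le> p \<and> odd (cc A p)}"
    using insert by auto
  have fE: "finite {i\<in>A. even (cc A i)}" using insert by auto
  have mE: "m \<notin> {i\<in>A. even (cc A i)}" using mA by auto
  have C1: "card {p. 1 \<le> p \<and> odd (cc (insert m A) p)} = (if odd (Suc (card A)) then m else 0) + card R"
    unfolding O1 by (rule c1)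
  have C2: "card {p. 1 \<le> p \<and> odd (cc A p)} = (if odd (card A) then m else 0) + card R"
    unfolding O2 by (rule c1)
  show ?case unfolding eq C1 using IH mA insert(1) fE mE C2
    by auto
qed


lemma cc_step: "finite J \<Longrightarrow> cc J i = (if i \<in> J then Suc (cc J (Suc i)) else cc J (Suc i))"
proof -
  assume f: "finite J"
  have "{j\<in>J. i \<le> j} = (if i \<in> J then insert i {j\<in>J. Suc i \<le> j} else {j\<in>J. Suc i \<le> j})"
    by (auto simp: Suc_le_eq le_less)
  then show ?thesis unfolding cc_def using f by auto
qed

lemma cc_big: "J \<subseteq> {1..n} \<Longrightarrow> n < p \<Longrightarrow> cc J p = 0"
  unfolding cc_def by (rule card_eq_0_iff[THEN iffD2]) (auto)

lemma cc_one: "J \<subseteq> {1..n} \<Longrightarrow> cc J 1 = card J"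
  unfolding cc_def by (rule arg_cong[where f=card]) auto

lemma Des_Delta:
  assumes u: "u \<in> perms n" and J: "J \<subseteq> {1..n}"
  shows "Des (DeltaSet J u) = (Des u - J) \<union> {i\<in>J. even (cc J i)}"
proof -
  have fJ: "finite J" using J finite_subset by blast
  have len: "length u = n" using u unfolding perms_def by auto
  have pos: "k < n \<Longrightarrow> u ! k > 0" for k
  proof -
    assume "k < n"
    then have "u ! k \<in> set u" using len by auto
    then show ?thesis using u unfolding perms_def by auto
  qed
  let ?w = "DeltaSet J u"
  have key: "1 \<le> i \<Longrightarrow> i < n \<Longrightarrow> sless (?w ! i) (?w ! (i - 1)) \<longleftrightarrow>
     (if i \<in> J then even (cc J i) else sless (u ! i) (u ! (i - 1)))" for i
  proof -
    assume i: "1 \<le> i" "i < n"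
    have a: "u ! i > 0" and b: "u ! (i - 1) > 0" using pos i by auto
    have wi: "?w ! i = (if odd (cc J (Suc i)) then - (u ! i) else u ! i)"
      using DeltaSet_nth[OF fJ] i len by simp
    have wi1: "?w ! (i - 1) = (if odd (cc J i) then - (u ! (i - 1)) else u ! (i - 1))"
      using DeltaSet_nth[OF fJ, of "i - 1" u] i len by simp
    show ?thesis using a b unfolding wi wi1 cc_step[OF fJ, of i] sless_def by auto
  qed
  have nJ: "n \<in> J \<Longrightarrow> odd (cc J n)"
    using cc_step[OF fJ, of n] cc_big[OF J, of "Suc n"] by simp
  show ?thesis
  proof (rule set_eqI)
    fix i
    show "i \<in> Des ?w \<longleftrightarrow> i \<in> (Des u - J) \<union> {i\<in>J. even (cc J i)}"
    proof (cases "1 \<le> i \<and> i < n")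
      case True
      then show ?thesis using key[of i] len unfolding Des_def by auto
    next
      case False
      then have "i \<notin> J \<or> i = n" using J by auto
      then show ?thesis using False nJ len unfolding Des_def by auto
    qed
  qed
qed


theorem lemma9:
  fixes n :: nat and u :: "int list" and J :: "nat set" and t q :: "'a::comm_ring_1"
  assumes "u \<in> perms n" and "J \<subseteq> {1..n}"
  shows "wt t q (DeltaSet J u) =
    t ^ des u * q ^ maj u * (\<Prod>j\<in>(J \<union> Des u) - (J \<inter> Des u). t * q ^ j)"
proof -
  note u = assms(1) and J = assms(2)
  have fJ: "finite J" using J finite_subset by blast
  have len: "length u = n" using u unfolding perms_def by auto
  have pos: "k < n \<Longrightarrow> u ! k > 0" for k
  proof -
    assume "k < n"
    then have "u ! k \<in> set u" using len by auto
    then show ?thesis using u unfolding perms_def by auto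
  qed
  define w where "w = DeltaSet J u"
  define D where "D = Des u"
  define E where "E = {i\<in>J. even (cc J i)}"
  define S where "S = (J \<union> D) - (J \<inter> D)"
  have fD: "finite D" unfolding D_def Des_def by (rule finite_subset[of _ "{..<length u}"]) auto
  have fE: "finite E" unfolding E_def using fJ by auto
  have DesW: "Des w = (D - J) \<union> E" unfolding w_def D_def E_def using Des_Delta[OF u J] .
  have dis: "(D - J) \<inter> E = {}" unfolding E_def by auto
  have desw: "des w = card (D - J) + card E" unfolding des_def DesW
    using fD fE dis by (simp add: card_Un_disjoint)
  have majw: "maj w = \<Sum>(D - J) + \<Sum>E" unfolding maj_def DesW
    using fD fE dis by (simp add: sum.union_disjoint)
  have cE: "card E = card J div 2" unfolding E_def using count_E[OF fJ] .
  have sE: "\<Sum>J = 2 * \<Sum>E + card {p. 1 \<le> p \<and> odd (cc J p)}"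
    unfolding E_def using sum_E[OF fJ] J by force
  have hd: "(w \<noteq> [] \<and> hd w < 0) \<longleftrightarrow> odd (card J)"
  proof (cases "n = 0")
    case True
    then have "J = {}" using J by auto
    then show ?thesis using True len unfolding w_def by (simp add: DeltaSet_def)
  next
    case False
    then have "w \<noteq> []" using len unfolding w_def by (metis DeltaSet_len length_0_conv)
    then have "hd w = w ! 0" by (simp add: hd_conv_nth)
    also have "\<dots> = (if odd (card J) then - (u ! 0) else u ! 0)"
      unfolding w_def using DeltaSet_nth[OF fJ, of 0 u] False len cc_one[OF J] by simp
    finally show ?thesis using pos[of 0] False \<open>w \<noteq> []\<close> by auto
  qed
  have negs: "negs w = card {p. 1 \<le> p \<and> odd (cc J p)}"
  proof -
    have "{i. 1 \<le> i \<and> i \<le> length w \<and> w ! (i - 1) < 0} = {p. 1 \<le> p \<and> odd (cc J p)}"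
    proof (rule set_eqI)
      fix p
      show "p \<in> {i. 1 \<le> i \<and> i \<le> length w \<and> w ! (i - 1) < 0} \<longleftrightarrow> p \<in> {p. 1 \<le> p \<and> odd (cc J p)}"
      proof (cases "1 \<le> p \<and> p \<le> n")
        case True
        have "w ! (p - 1) = (if odd (cc J p) then - (u ! (p - 1)) else u ! (p - 1))"
        proof -
          obtain k where k: "p = Suc k" using True by (cases p) auto
          show ?thesis unfolding w_def k using DeltaSet_nth[OF fJ, of k u] True len k by simp
        qed
        moreover have "u ! (p - 1) > 0" using pos True by auto
        ultimately show ?thesis using True len unfolding w_def by auto
      next
        case False
        then show ?thesis using cc_big[OF J, of p] len unfolding w_def by auto
      qed
    qed
    then show ?thesis unfolding negs_def by simp
  qed
  have cS: "card S = card (J - D) + card (D - J)"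
  proof -
    have "S = (J - D) \<union> (D - J)" unfolding S_def by auto
    then show ?thesis using fJ fD by (simp add: card_Un_disjoint Diff_Int_distrib2 inf_commute)
  qed
  have sS: "\<Sum>S = \<Sum>(J - D) + \<Sum>(D - J)"
  proof -
    have "S = (J - D) \<union> (D - J)" unfolding S_def by auto
    then show ?thesis using fJ fD by (simp add: sum.union_disjoint Diff_Int_distrib2 inf_commute)
  qed
  have cD: "card D = card (D \<inter> J) + card (D - J)" using fD
    by (metis card_Int_Diff inf_commute)
  have cJ: "card J = card (D \<inter> J) + card (J - D)" using fJ
    by (metis card_Int_Diff inf_commute)
  have sD: "\<Sum>D = \<Sum>(D \<inter> J) + \<Sum>(D - J)" using fD
    by (metis sum.Int_Diff)
  have sJ: "\<Sum>J = \<Sum>(D \<inter> J) + \<Sum>(J - D)" using fJ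
    by (metis sum.Int_Diff inf_commute)
  have e1: "fdes w = des u + card S"
    unfolding fdes_def using hd desw cE cS cD cJ unfolding des_def D_def[symmetric] by auto
  have e2: "fmaj w = maj u + \<Sum>S"
    unfolding fmaj_def using majw negs sE sS sD sJ unfolding maj_def D_def[symmetric] by auto
  have P: "(\<Prod>j\<in>S. t * q ^ j) = t ^ card S * q ^ (\<Sum>S)"
    by (simp add: prod.distrib power_sum)
  show ?thesis
    unfolding S_def[symmetric] D_def[symmetric] w_def[symmetric] wt_def P e1 e2
    by (simp add: power_add D_def ac_simps)
qed

end
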